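(* For every $m\ge2$, $\mathbf{E}_m=\bigvee_{r\ge1}\mathbf{M}(\mathbf{w}_{m,r})$, where $\mathbf{w}_{m,r}=x^{m-1}t_1x^{m-1}t_2x^{m-1}\cdots t_rx^{m-1}$.
   Context: All varieties are varieties of monoids (signature: associative binary operation and identity constant $1$); identities are pairs of words over a countably infinite set of variables, and variables may be substituted by $1$. $\mathbf{O}$ is the variety defined by $xyt_1xt_2y \approx yxt_1xt_2y$, $xt_1xyt_2y \approx xt_1yxt_2y$, $xt_1yt_2xy \approx xt_1yt_2yx$. For $m\ge1$, $\mathbf{E}_m$ is the subvariety of $\mathbf{O}$ defined additionally by $x^{m+1}\approx x^m$ and $x^mt\approx tx^m$. For a word $\mathbf{w}$, the factor monoid $M(\mathbf{w})$ consists of all factors (contiguous subwords, including the empty word $1$) of $\mathbf{w}$ together with a zero $0$, with product $\mathbf{u}\cdot\mathbf{v}=\mathbf{u}\mathbf{v}$ if $\mathbf{u}\mathbf{v}$ is a factor of $\mathbf{w}$ and $0$ otherwise; $\mathbf{M}(\mathbf{w})$ is the monoid variety generated by $M(\mathbf{w})$. The join $\bigvee$ is taken in the lattice of monoid varieties (the variety generated by the union). Here $x,t_1,\dots,t_r$ are distinct variables. *)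

theory Defs
  imports "HOL-Algebra.Group" "HOL-Library.Sublist"
begin

type_synonym word = "nat list"
type_synonym identity = "word \<times> word"

text \<open>Value of a word under an assignment of variables to monoid elements.
  Assigning the identity element realises substitution of variables by 1.\<close>

primrec word_eval :: "('a, 'b) monoid_scheme \<Rightarrow> (nat \<Rightarrow> 'a) \<Rightarrow> word \<Rightarrow> 'a" where
  "word_eval G \<phi> [] = \<one>\<^bsub>G\<^esub>"
| "word_eval G \<phi> (a # w) = \<phi> a \<otimes>\<^bsub>G\<^esub> word_eval G \<phi> w"

definition satisfies :: "('a, 'b) monoid_scheme \<Rightarrow> identity \<Rightarrow> bool" where
  "satisfies G idt \<longleftrightarrow>
     (\<forall>\<phi>. (\<forall>n. \<phi> n \<in> carrier G) \<longrightarrow> word_eval G \<phi> (fst idt) = word_eval G \<phi> (snd idt))"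

text \<open>Variables: x = 0, y = 1, t1 = 2, t2 = 3, t = 2.\<close>

definition O_ids :: "identity set" where
  "O_ids = { ([0,1,2,0,3,1], [1,0,2,0,3,1]),
             ([0,2,0,1,3,1], [0,2,1,0,3,1]),
             ([0,2,1,3,0,1], [0,2,1,3,1,0]) }"

definition E_ids :: "nat \<Rightarrow> identity set" where
  "E_ids m = O_ids \<union> { (replicate (m+1) 0, replicate m 0),
                         (replicate m 0 @ [2], [2] @ replicate m 0) }"

definition in_E :: "nat \<Rightarrow> ('a, 'b) monoid_scheme \<Rightarrow> bool" where
  "in_E m G \<longleftrightarrow> monoid G \<and> (\<forall>idt \<in> E_ids m. satisfies G idt)"

text \<open>Factor monoid M(w): factors of w as Some u, zero as None.\<close>
definition factor_monoid :: "'x list \<Rightarrow> 'x list option monoid" where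
  "factor_monoid w =
     \<lparr> carrier = insert None (Some ` {u. sublist u w}),
       mult = (\<lambda>p q. case (p, q) of
                  (Some u, Some v) \<Rightarrow> (if sublist (u @ v) w then Some (u @ v) else None)
                | _ \<Rightarrow> None),
       one = Some [] \<rparr>"

text \<open>w_{m,r} = x^(m-1) t1 x^(m-1) ... tr x^(m-1), with x = 0 and t_i = i.\<close>
definition w_mr :: "nat \<Rightarrow> nat \<Rightarrow> nat list" where
  "w_mr m r = replicate (m-1) 0 @ concat (map (\<lambda>i. i # replicate (m-1) 0) [1..<r+1])"

text \<open>Membership in the join of the varieties generated by a family of monoids:
  the join is the variety generated by the union, i.e. (Birkhoff) the class of all
  monoids satisfying every identity that holds in all members of the family.\<close>
definition in_join_M :: "nat \<Rightarrow> ('a, 'b) monoid_scheme \<Rightarrow> bool" where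
  "in_join_M m G \<longleftrightarrow> monoid G \<and>
     (\<forall>idt. (\<forall>r\<ge>1. satisfies (factor_monoid (w_mr m r)) idt) \<longrightarrow> satisfies G idt)"

end

theory Submission
  imports Defs "HOL-Library.Multiset"
begin


lemma eval_fm:
  "word_eval (factor_monoid w) \<phi> u =
    (if (\<forall>a\<in>set u. \<phi> a \<noteq> None) \<and> sublist (concat (map (\<lambda>a. the (\<phi> a)) u)) w
     then Some (concat (map (\<lambda>a. the (\<phi> a)) u)) else None)"
proof (induction u)
  case Nil
  then show ?case by (simp add: factor_monoid_def)
next
  case (Cons a u)
  show ?case
  proof (cases "\<phi> a")
    case None
    then show ?thesis by (simp add: factor_monoid_def)
  next
    case (Some p)
    have suf: "sublist (p @ q) w \<Longrightarrow> sublist q w" for q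
      by (meson sublist_append_leftI sublist_order.dual_order.trans)
    have m: "word_eval (factor_monoid w) \<phi> (a # u) =
       (case word_eval (factor_monoid w) \<phi> u of None \<Rightarrow> None
        | Some q \<Rightarrow> if sublist (p @ q) w then Some (p @ q) else None)"
      using Some by (simp add: factor_monoid_def split: option.splits)
    show ?thesis unfolding m Cons.IH using Some suf by auto
  qed
qed

lemma sublist_split_notin:
  assumes "sublist s (A @ c # B)" "c \<notin> set s"
  shows "sublist s A \<or> sublist s B"
proof -
  from assms(1) consider "sublist s A" | "sublist s (c # B)"
    | s1 s2 where "s = s1 @ s2" "suffix s1 A" "prefix s2 (c # B)"
    unfolding sublist_append by blast
  then show ?thesis
  proof cases
    case 2
    then show ?thesis using assms(2)
      by (auto simp: sublist_Cons_right prefix_Cons)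
  next
    case 3
    then show ?thesis using assms(2)
      by (cases s2) (auto simp: prefix_Cons)
  qed auto
qed

definition Zw :: "nat \<Rightarrow> nat list \<Rightarrow> nat list" where
  "Zw m ns = replicate (m-1) 0 @ concat (map (\<lambda>i. i # replicate (m-1) 0) ns)"

lemma w_mr_Zw: "w_mr m r = Zw m [1..<r+1]"
  by (simp add: w_mr_def Zw_def)

lemma Zw_Cons: "Zw m (n # ns) = replicate (m-1) 0 @ n # Zw m ns"
  by (simp add: Zw_def)

lemma no_zero_run:
  assumes "m \<ge> 1" "0 \<notin> set ns"
  shows "\<not> sublist (replicate m (0::nat)) (Zw m ns)"
  using assms(2)
proof (induction ns)
  case Nil
  then show ?case using assms(1) by (auto simp: Zw_def dest: sublist_length_le)
next
  case (Cons n ns)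
  show ?case
  proof
    assume "sublist (replicate m 0) (Zw m (n # ns))"
    then have h: "sublist (replicate m 0) (replicate (m-1) 0 @ n # Zw m ns)"
      by (simp only: Zw_Cons)
    have "n \<notin> set (replicate m 0)" using Cons.prems by auto
    then have "sublist (replicate m 0) (replicate (m-1) (0::nat)) \<or> sublist (replicate m 0) (Zw m ns)"
      by (rule sublist_split_notin[OF h])
    then show False using Cons assms(1) by (auto dest: sublist_length_le)
  qed
qed

lemma count_Zw:
  assumes "c \<noteq> 0" "distinct ns"
  shows "count (mset (Zw m ns)) c \<le> 1"
  using assms(2)
proof (induction ns)
  case Nil
  then show ?case using assms by (simp add: Zw_def)
next
  case (Cons n ns)
  have "count (mset (Zw m (n # ns))) c = (if n = c then 1 else 0) + count (mset (Zw m ns)) c"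
    using assms(1) by (simp add: Zw_Cons)
  moreover have "n = c \<Longrightarrow> count (mset (Zw m ns)) c = 0"
  proof -
    assume "n = c"
    then have "c \<notin> set ns" using Cons by auto
    then show ?thesis using assms(1) by (simp add: Zw_def count_eq_zero_iff)
  qed
  ultimately show ?case using Cons by auto
qed

lemma sublist_count_le:
  "sublist s w \<Longrightarrow> count (mset s) c \<le> count (mset w) c"
  by (auto simp: sublist_def)

lemma nonfactor_count:
  assumes "c \<noteq> 0" "count (mset s) c \<ge> 2"
  shows "\<not> sublist s (w_mr m r)"
proof
  assume "sublist s (w_mr m r)"
  then have "count (mset s) c \<le> count (mset (Zw m [1..<r+1])) c"
    by (simp add: w_mr_Zw sublist_count_le)
  also have "\<dots> \<le> 1" using assms by (intro count_Zw) auto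
  finally show False using assms by simp
qed

lemma nonfactor_zeros:
  assumes "m \<ge> 1" "sublist (replicate m 0) s"
  shows "\<not> sublist s (w_mr m r)"
proof
  assume "sublist s (w_mr m r)"
  then have "sublist (replicate m 0) (Zw m [1..<r+1])"
    using assms(2) sublist_order.order_trans unfolding w_mr_Zw by blast
  then show False using no_zero_run[OF assms(1), of "[1..<r+1]"] by simp
qed

lemma count_concat_replicate:
  "count (mset (concat (replicate n X))) c = n * count (mset X) c"
  by (induction n) auto

lemma concat_replicate_zeros:
  assumes "set X \<subseteq> {0}"
  shows "concat (replicate n X) = replicate (n * length X) (0::nat)"
  using assms
proof (induction n)
  case (Suc n)
  have "X = replicate (length X) 0" using Suc.prems
    by (intro replicate_length_same[symmetric]) auto
  then obtain k where k: "X = replicate k 0" by blast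
  show ?case using Suc unfolding k by (simp add: replicate_add[symmetric])
qed simp

lemma nonfactor_power:
  assumes "m \<ge> 2" "X \<noteq> []" "sublist (concat (replicate m X)) s"
  shows "\<not> sublist s (w_mr m r)"
proof (cases "\<exists>c\<in>set X. c \<noteq> 0")
  case True
  then obtain c where c: "c \<in> set X" "c \<noteq> 0" by blast
  have "count (mset (concat (replicate m X))) c \<ge> 2"
  proof -
    have "count (mset X) c \<ge> 1" using c by simp
    then have mle: "m * 1 \<le> m * count (mset X) c" by (rule mult_le_mono2)
    have e: "count (mset (concat (replicate m X))) c = m * count (mset X) c"
      by (rule count_concat_replicate)
    show ?thesis using e mle assms(1) by linarith
  qed
  then have "count (mset s) c \<ge> 2" using sublist_count_le[OF assms(3)] by (meson le_trans)
  then show ?thesis using nonfactor_count c by blast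
next
  case False
  then have "set X \<subseteq> {0}" by auto
  then have "concat (replicate m X) = replicate (m * length X) 0" by (rule concat_replicate_zeros)
  moreover have "m * length X = m + (m * length X - m)" using assms(2)
    by (cases X) auto
  ultimately have "sublist (replicate m 0) (concat (replicate m X))"
    by (metis replicate_add sublist_append_rightI)
  then have "sublist (replicate m 0) s" using assms(3) sublist_order.order_trans by blast
  then show ?thesis using nonfactor_zeros assms(1) by simp
qed



lemma sat_fm_general:
  fixes w :: "'x list"
  assumes "set l = set r"
    and "\<And>\<theta>. concat (map \<theta> l) \<noteq> concat (map \<theta> r) \<Longrightarrow>
          \<not> sublist (concat (map \<theta> l)) w \<and> \<not> sublist (concat (map \<theta> r)) w"
  shows "satisfies (factor_monoid w) (l, r)"
  unfolding satisfies_def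
proof (intro allI impI)
  fix \<phi> :: "nat \<Rightarrow> 'x list option"
  let ?\<theta> = "\<lambda>a. the (\<phi> a)"
  show "word_eval (factor_monoid w) \<phi> (fst (l, r)) = word_eval (factor_monoid w) \<phi> (snd (l, r))"
  proof (cases "concat (map ?\<theta> l) = concat (map ?\<theta> r)")
    case True
    then show ?thesis using assms(1) by (simp add: eval_fm)
  next
    case False
    then show ?thesis using assms(2)[OF False] by (simp add: eval_fm)
  qed
qed

lemma zeros_commute:
  assumes "set X \<subseteq> {0::nat}" "set Y \<subseteq> {0}"
  shows "X @ Y = Y @ X"
proof -
  have "X = replicate (length X) 0" "Y = replicate (length Y) 0" using assms
    by (auto intro!: replicate_length_same[symmetric])
  then obtain a b where "X = replicate a 0" "Y = replicate b 0" by blast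
  then show ?thesis by (simp add: replicate_add[symmetric] add.commute)
qed

lemma O_type_nonfactor:
  assumes "X @ Y \<noteq> Y @ X"
    and "\<And>c. count (mset s) c \<ge> 2 * count (mset X) c"
    and "\<And>c. count (mset s) c \<ge> 2 * count (mset Y) c"
  shows "\<not> sublist s (w_mr m r)"
proof -
  have "\<not> (set X \<subseteq> {0} \<and> set Y \<subseteq> {0})" using assms(1) zeros_commute by blast
  then obtain c where c: "c \<noteq> 0" "c \<in> set X \<or> c \<in> set Y" by auto
  have "count (mset s) c \<ge> 2"
  proof (cases "c \<in> set X")
    case True
    then have "count (mset X) c \<ge> 1" by simp
    then show ?thesis using assms(2)[of c] by linarith
  next
    case False
    then have "count (mset Y) c \<ge> 1" using c by simp
    then show ?thesis using assms(3)[of c] by linarith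
  qed
  then show ?thesis using nonfactor_count c(1) by blast
qed

lemma concat_map_replicate: "concat (map f (replicate n a)) = concat (replicate n (f a))"
  by (induction n) auto

lemma sublist_concat_replicate_Suc:
  "concat (replicate (Suc n) X) = concat (replicate n X) @ X"
  by (induction n) auto

lemma fm_sat_E:
  assumes "m \<ge> 2" "idt \<in> E_ids m"
  shows "satisfies (factor_monoid (w_mr m r)) idt"
proof -
  let ?w = "w_mr m r"
  have O1: "satisfies (factor_monoid ?w) ([0,1,2,0,3,1], [1,0,2,0,3,1])"
  proof (rule sat_fm_general)
    fix \<theta> :: "nat \<Rightarrow> nat list"
    assume ne: "concat (map \<theta> [0,1,2,0,3,1]) \<noteq> concat (map \<theta> [1,0,2,0,3,1])"
    then have "\<theta> 0 @ \<theta> 1 \<noteq> \<theta> 1 @ \<theta> 0" by auto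
    then show "\<not> sublist (concat (map \<theta> [0,1,2,0,3,1])) ?w \<and> \<not> sublist (concat (map \<theta> [1,0,2,0,3,1])) ?w"
      by (intro conjI O_type_nonfactor) auto
  qed auto
  have O2: "satisfies (factor_monoid ?w) ([0,2,0,1,3,1], [0,2,1,0,3,1])"
  proof (rule sat_fm_general)
    fix \<theta> :: "nat \<Rightarrow> nat list"
    assume ne: "concat (map \<theta> [0,2,0,1,3,1]) \<noteq> concat (map \<theta> [0,2,1,0,3,1])"
    then have "\<theta> 0 @ \<theta> 1 \<noteq> \<theta> 1 @ \<theta> 0" by auto
    then show "\<not> sublist (concat (map \<theta> [0,2,0,1,3,1])) ?w \<and> \<not> sublist (concat (map \<theta> [0,2,1,0,3,1])) ?w"
      by (intro conjI O_type_nonfactor) auto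
  qed auto
  have O3: "satisfies (factor_monoid ?w) ([0,2,1,3,0,1], [0,2,1,3,1,0])"
  proof (rule sat_fm_general)
    fix \<theta> :: "nat \<Rightarrow> nat list"
    assume ne: "concat (map \<theta> [0,2,1,3,0,1]) \<noteq> concat (map \<theta> [0,2,1,3,1,0])"
    then have "\<theta> 0 @ \<theta> 1 \<noteq> \<theta> 1 @ \<theta> 0" by auto
    then show "\<not> sublist (concat (map \<theta> [0,2,1,3,0,1])) ?w \<and> \<not> sublist (concat (map \<theta> [0,2,1,3,1,0])) ?w"
      by (intro conjI O_type_nonfactor) auto
  qed auto
  have E1: "satisfies (factor_monoid ?w) (replicate (m+1) 0, replicate m 0)"
  proof (rule sat_fm_general)
    show "set (replicate (m + 1) 0) = set (replicate m (0::nat))" using assms(1) by simp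
  next
    fix \<theta> :: "nat \<Rightarrow> nat list"
    assume ne: "concat (map \<theta> (replicate (m+1) 0)) \<noteq> concat (map \<theta> (replicate m 0))"
    then have X: "\<theta> 0 \<noteq> []" by (auto simp: concat_map_replicate)
    show "\<not> sublist (concat (map \<theta> (replicate (m+1) 0))) ?w \<and> \<not> sublist (concat (map \<theta> (replicate m 0))) ?w"
      using nonfactor_power[OF assms(1) X]
      by (simp add: concat_map_replicate sublist_concat_replicate_Suc)
  qed
  have E2: "satisfies (factor_monoid ?w) (replicate m 0 @ [2], [2] @ replicate m 0)"
  proof (rule sat_fm_general)
    fix \<theta> :: "nat \<Rightarrow> nat list"
    assume ne: "concat (map \<theta> (replicate m 0 @ [2])) \<noteq> concat (map \<theta> ([2] @ replicate m 0))"
    then have X: "\<theta> 0 \<noteq> []" by (auto simp: concat_map_replicate)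
    show "\<not> sublist (concat (map \<theta> (replicate m 0 @ [2]))) ?w \<and> \<not> sublist (concat (map \<theta> ([2] @ replicate m 0))) ?w"
      using nonfactor_power[OF assms(1) X]
      by (simp add: concat_map_replicate)
  qed auto
  show ?thesis using assms(2) O1 O2 O3 E1 E2 unfolding E_ids_def O_ids_def by auto
qed



definition sig4 :: "'x list \<Rightarrow> 'x list \<Rightarrow> 'x list \<Rightarrow> 'x list \<Rightarrow> nat \<Rightarrow> 'x list" where
  "sig4 A B C D = (\<lambda>n. if n = 0 then A else if n = 1 then B else if n = 2 then C else D)"

lemma sig4_simps [simp]: "sig4 A B C D 0 = A" "sig4 A B C D 1 = B" "sig4 A B C D 2 = C"
  "sig4 A B C D 3 = D"
  by (auto simp: sig4_def)

locale Em = monoid G for G :: "('a, 'b) monoid_scheme" +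
  fixes m :: nat and \<phi> :: "nat \<Rightarrow> 'a"
  assumes m2: "m \<ge> 2"
    and sat: "\<And>idt. idt \<in> E_ids m \<Longrightarrow> satisfies G idt"
    and phi: "\<And>n. \<phi> n \<in> carrier G"
begin

abbreviation e :: "nat list \<Rightarrow> 'a" where "e \<equiv> word_eval G \<phi>"

lemma e_closed [simp]: "word_eval G \<psi> w \<in> carrier G" if "\<And>n. \<psi> n \<in> carrier G"
  using that by (induction w) auto

lemma e_cl [simp]: "e w \<in> carrier G" using phi by simp

lemma e_append [simp]: "e (u @ v) = e u \<otimes>\<^bsub>G\<^esub> e v"
  by (induction u) (auto simp: m_assoc phi)

lemma e_concat_map: "e (concat (map \<sigma> w)) = word_eval G (\<lambda>n. e (\<sigma> n)) w"
  by (induction w) auto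

lemma apply_id:
  assumes "(l, r) \<in> E_ids m"
  shows "e (p @ concat (map \<sigma> l) @ q) = e (p @ concat (map \<sigma> r) @ q)"
proof -
  have "word_eval G (\<lambda>n. e (\<sigma> n)) l = word_eval G (\<lambda>n. e (\<sigma> n)) r"
    using sat[OF assms] unfolding satisfies_def by auto
  then show ?thesis by (simp add: e_concat_map)
qed

lemma O1: "e (p @ concat (map \<sigma> [0,1,2,0,3,1::nat]) @ q) = e (p @ concat (map \<sigma> [1,0,2,0,3,1::nat]) @ q)"
  by (rule apply_id) (simp add: E_ids_def O_ids_def)
lemma O2: "e (p @ concat (map \<sigma> [0,2,0,1,3,1::nat]) @ q) = e (p @ concat (map \<sigma> [0,2,1,0,3,1::nat]) @ q)"
  by (rule apply_id) (simp add: E_ids_def O_ids_def)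
lemma O3: "e (p @ concat (map \<sigma> [0,2,1,3,0,1::nat]) @ q) = e (p @ concat (map \<sigma> [0,2,1,3,1,0::nat]) @ q)"
  by (rule apply_id) (simp add: E_ids_def O_ids_def)

lemma swap:
  assumes "a \<noteq> b" "a \<in> set p \<or> a \<in> set q" "b \<in> set p \<or> b \<in> set q"
  shows "e (p @ a # b # q) = e (p @ b # a # q)"
proof -
  consider "a \<in> set q" "b \<in> set q" | "a \<in> set p" "b \<in> set p" | "a \<in> set p" "b \<in> set q"
    | "a \<in> set q" "b \<in> set p" using assms by blast
  then show ?thesis
  proof cases
    case 1
    obtain q1 q2 where q: "q = q1 @ a # q2" "a \<notin> set q1" using 1 split_list_first by metis
    have "b \<in> set q1 \<or> b \<in> set q2" using 1 q assms(1) by auto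
    then show ?thesis
    proof
      assume "b \<in> set q2"
      then obtain q3 q4 where "q2 = q3 @ b # q4" by (metis split_list)
      then show ?thesis using O1[of p "sig4 [a] [b] q1 q3" q4] q by (simp add: sig4_def)
    next
      assume "b \<in> set q1"
      then obtain q3 q4 where "q1 = q3 @ b # q4" by (metis split_list)
      then show ?thesis using O1[of p "sig4 [b] [a] q3 q4" q2] q by (simp add: sig4_def)
    qed
  next
    case 2
    obtain p1 p2 where p: "p = p1 @ a # p2" using 2 split_list by metis
    have "b \<in> set p1 \<or> b \<in> set p2" using 2 p assms(1) by auto
    then show ?thesis
    proof
      assume "b \<in> set p2"
      then obtain p3 p4 where "p2 = p3 @ b # p4" by (metis split_list)
      then show ?thesis using O3[of p1 "sig4 [a] [b] p3 p4" q] p by (simp add: sig4_def)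
    next
      assume "b \<in> set p1"
      then obtain p3 p4 where "p1 = p3 @ b # p4" by (metis split_list)
      then show ?thesis using O3[of p3 "sig4 [b] [a] p4 p2" q] p by (simp add: sig4_def)
    qed
  next
    case 3
    obtain p1 p2 where p: "p = p1 @ a # p2" using 3 split_list by metis
    obtain q1 q2 where q: "q = q1 @ b # q2" using 3 split_list by metis
    show ?thesis using O2[of p1 "sig4 [a] [b] p2 q1" q2] p q by (simp add: sig4_def)
  next
    case 4
    obtain p1 p2 where p: "p = p1 @ b # p2" using 4 split_list by metis
    obtain q1 q2 where q: "q = q1 @ a # q2" using 4 split_list by metis
    show ?thesis using O2[of p1 "sig4 [b] [a] p2 q1" q2] p q by (simp add: sig4_def)
  qed
qed

end


lemma sort_mset_eq: "mset s = mset s' \<Longrightarrow> sort s = sort (s' :: nat list)"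
  by (metis properties_for_sort mset_sort sorted_sort)

lemma concat_replicate_single: "concat (replicate n [x]) = replicate n x"
  by (induction n) auto

definition dead :: "nat \<Rightarrow> nat list \<Rightarrow> nat \<Rightarrow> bool" where
  "dead m u x \<longleftrightarrow> (\<exists>p s q. u = p @ s @ q \<and> (\<forall>y\<in>set s. count (mset u) y \<ge> 2)
                        \<and> count (mset s) x \<ge> m)"

lemma mset_gather:
  "mset (replicate (count (mset s) x) x @ filter (\<lambda>y. y \<noteq> x) s) = mset s"
  by (induction s) auto

lemma dead_filter:
  assumes "dead m u x'" "x' \<noteq> x"
  shows "dead m (filter (\<lambda>y. y \<noteq> x) u) x'"
proof -
  obtain p s q where u: "u = p @ s @ q" "\<forall>y\<in>set s. count (mset u) y \<ge> 2" "count (mset s) x' \<ge> m"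
    using assms(1) unfolding dead_def by blast
  let ?f = "filter (\<lambda>y. y \<noteq> x)"
  have "?f u = ?f p @ ?f s @ ?f q" using u by simp
  moreover have "\<forall>y\<in>set (?f s). count (mset (?f u)) y \<ge> 2" using u(2) by auto
  moreover have "count (mset (?f s)) x' \<ge> m" using u(3) assms(2) by simp
  ultimately show ?thesis unfolding dead_def by blast
qed

context Em begin

lemma pow_central0: "e (replicate m x) \<otimes>\<^bsub>G\<^esub> e w = e w \<otimes>\<^bsub>G\<^esub> e (replicate m x)"
proof -
  have "e ([] @ concat (map (sig4 [x] [] w []) (replicate m 0 @ [2])) @ []) =
        e ([] @ concat (map (sig4 [x] [] w []) ([2] @ replicate m 0)) @ [])"
    by (rule apply_id) (simp add: E_ids_def)
  then show ?thesis by (simp add: concat_map_replicate concat_replicate_single)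
qed

lemmas pow_central = pow_central0

lemma count2_elsewhere:
  assumes "count (mset (p @ a # q)) a \<ge> 2"
  shows "a \<in> set p \<or> a \<in> set q"
proof -
  show ?thesis
  proof (rule ccontr)
    assume "\<not> ?thesis"
    then have "count (mset p) a = 0" "count (mset q) a = 0" by simp_all
    moreover have "count (mset (p @ a # q)) a = count (mset p) a + 1 + count (mset q) a" by simp
    ultimately show False using assms by linarith
  qed
qed

lemma central_phi: "e (replicate m x) \<otimes>\<^bsub>G\<^esub> \<phi> a = \<phi> a \<otimes>\<^bsub>G\<^esub> e (replicate m x)"
  using pow_central0[of x "[a]"] by (simp add: phi)

lemma insort_lemma:
  assumes "\<forall>y\<in>set (a # l). count (mset (p @ a # l @ q)) y \<ge> 2"
  shows "e (p @ a # l @ q) = e (p @ insort a l @ q)"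
  using assms
proof (induction l arbitrary: p)
  case Nil
  then show ?case by simp
next
  case (Cons b l)
  show ?case
  proof (cases "a \<le> b")
    case True
    then show ?thesis by simp
  next
    case False
    then have ab: "a \<noteq> b" by auto
    have ca: "count (mset (p @ a # (b # l @ q))) a \<ge> 2" using Cons.prems by simp
    have cb: "count (mset ((p @ [a]) @ b # (l @ q))) b \<ge> 2" using Cons.prems by simp
    have "a \<in> set p \<or> a \<in> set (l @ q)" using count2_elsewhere[OF ca] ab by auto
    moreover have "b \<in> set p \<or> b \<in> set (l @ q)"
      using count2_elsewhere[OF cb] ab by auto
    ultimately have "e (p @ a # b # (l @ q)) = e (p @ b # a # (l @ q))"
      by (intro swap ab) auto
    also have "\<dots> = e ((p @ [b]) @ a # l @ q)" by simp
    also have "\<dots> = e ((p @ [b]) @ insort a l @ q)"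
      by (rule Cons.IH) (use Cons.prems in auto)
    finally show ?thesis using False by simp
  qed
qed

lemma sort_lemma:
  assumes "\<forall>y\<in>set s. count (mset (p @ s @ q)) y \<ge> 2"
  shows "e (p @ s @ q) = e (p @ sort s @ q)"
  using assms
proof (induction s arbitrary: p)
  case Nil
  then show ?case by simp
next
  case (Cons a s)
  have "e (p @ (a # s) @ q) = e ((p @ [a]) @ s @ q)" by simp
  also have "\<dots> = e ((p @ [a]) @ sort s @ q)"
    by (rule Cons.IH) (use Cons.prems in auto)
  also have "\<dots> = e (p @ a # sort s @ q)" by simp
  also have "\<dots> = e (p @ insort a (sort s) @ q)"
    by (rule insort_lemma) (use Cons.prems in auto)
  finally show ?case by simp
qed

lemma perm_lemma:
  assumes "mset s = mset s'" "\<forall>y\<in>set s. count (mset (p @ s @ q)) y \<ge> 2"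
  shows "e (p @ s @ q) = e (p @ s' @ q)"
proof -
  have a2: "\<forall>y\<in>set s'. count (mset (p @ s' @ q)) y \<ge> 2"
    using assms by (metis mset_append mset_eq_setD)
  have "e (p @ s @ q) = e (p @ sort s @ q)" by (rule sort_lemma[OF assms(2)])
  also have "sort s = sort s'" by (rule sort_mset_eq[OF assms(1)])
  also have "e (p @ sort s' @ q) = e (p @ s' @ q)" by (rule sort_lemma[OF a2, symmetric])
  finally show ?thesis .
qed

lemma pow_absorb: "e (replicate m x) \<otimes>\<^bsub>G\<^esub> \<phi> x = e (replicate m x)"
proof -
  have "e ([] @ concat (map (sig4 [x] [] [] []) (replicate (m+1) 0)) @ []) =
        e ([] @ concat (map (sig4 [x] [] [] []) (replicate m 0)) @ [])"
    by (rule apply_id) (simp add: E_ids_def)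
  then have "e (replicate (m+1) x) = e (replicate m x)"
    by (simp add: concat_map_replicate concat_replicate_single del: replicate.simps)
  moreover have "replicate (m+1) x = replicate m x @ [x]" by (simp add: replicate_append_same)
  ultimately have "\<phi> x \<otimes>\<^bsub>G\<^esub> e (replicate m x) = e (replicate m x)" by (simp add: phi)
  then show ?thesis by (simp add: central_phi)
qed

lemma absorb: "e (replicate m x @ w) = e (replicate m x @ filter (\<lambda>y. y \<noteq> x) w)"
proof (induction w)
  case Nil
  then show ?case by simp
next
  case (Cons a w)
  let ?c = "e (replicate m x)"
  show ?case
  proof (cases "a = x")
    case True
    have "e (replicate m x @ a # w) = (?c \<otimes>\<^bsub>G\<^esub> \<phi> x) \<otimes>\<^bsub>G\<^esub> e w"
      using True by (simp add: m_assoc phi)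
    also have "\<dots> = e (replicate m x @ w)" by (simp add: pow_absorb)
    finally show ?thesis using Cons True by simp
  next
    case False
    have "e (replicate m x @ a # w) = (?c \<otimes>\<^bsub>G\<^esub> e [a]) \<otimes>\<^bsub>G\<^esub> e w"
      by (simp add: m_assoc phi)
    also have "\<dots> = \<phi> a \<otimes>\<^bsub>G\<^esub> (?c \<otimes>\<^bsub>G\<^esub> e w)"
      by (simp add: central_phi m_assoc phi)
    also have "?c \<otimes>\<^bsub>G\<^esub> e w = e (replicate m x @ filter (\<lambda>y. y \<noteq> x) w)"
      using Cons by simp
    also have "\<phi> a \<otimes>\<^bsub>G\<^esub> e (replicate m x @ filter (\<lambda>y. y \<noteq> x) w) =
       (\<phi> a \<otimes>\<^bsub>G\<^esub> ?c) \<otimes>\<^bsub>G\<^esub> e (filter (\<lambda>y. y \<noteq> x) w)"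
      by (simp add: m_assoc phi)
    also have "\<dots> = (?c \<otimes>\<^bsub>G\<^esub> \<phi> a) \<otimes>\<^bsub>G\<^esub> e (filter (\<lambda>y. y \<noteq> x) w)"
      by (simp add: central_phi)
    also have "\<dots> = e (replicate m x @ filter (\<lambda>y. y \<noteq> x) (a # w))"
      using False by (simp add: m_assoc phi)
    finally show ?thesis .
  qed
qed

lemma absorb_mid:
  "e (p @ replicate m x @ q) = e (replicate m x @ filter (\<lambda>y. y \<noteq> x) (p @ q))"
proof -
  let ?c = "e (replicate m x)"
  have "e (p @ replicate m x @ q) = (e p \<otimes>\<^bsub>G\<^esub> ?c) \<otimes>\<^bsub>G\<^esub> e q" by (simp add: m_assoc)
  also have "\<dots> = (?c \<otimes>\<^bsub>G\<^esub> e p) \<otimes>\<^bsub>G\<^esub> e q" by (simp only: pow_central)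
  also have "\<dots> = ?c \<otimes>\<^bsub>G\<^esub> e (p @ q)" by (simp add: m_assoc)
  also have "\<dots> = e (replicate m x @ (p @ q))" by simp
  also have "\<dots> = e (replicate m x @ filter (\<lambda>y. y \<noteq> x) (p @ q))" by (rule absorb)
  finally show ?thesis .
qed

lemma absorb_dead:
  assumes "dead m u x"
  shows "e u = e (replicate m x @ filter (\<lambda>y. y \<noteq> x) u)"
proof -
  obtain p s q where u: "u = p @ s @ q" "\<forall>y\<in>set s. count (mset u) y \<ge> 2" "count (mset s) x \<ge> m"
    using assms unfolding dead_def by blast
  let ?k = "count (mset s) x"
  let ?s' = "replicate ?k x @ filter (\<lambda>y. y \<noteq> x) s"
  have "e u = e (p @ ?s' @ q)"
    unfolding u(1) by (rule perm_lemma) (use mset_gather[symmetric] u in auto)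
  also have "p @ ?s' @ q = (p @ replicate (?k - m) x) @ replicate m x @ (filter (\<lambda>y. y \<noteq> x) s @ q)"
  proof -
    have "replicate ?k x = replicate (?k - m) x @ replicate m x"
      using u(3) by (simp add: replicate_add[symmetric])
    then show ?thesis by simp
  qed
  also have "e \<dots> = e (replicate m x @ filter (\<lambda>y. y \<noteq> x) ((p @ replicate (?k - m) x) @ (filter (\<lambda>y. y \<noteq> x) s @ q)))"
    by (rule absorb_mid)
  also have "filter (\<lambda>y. y \<noteq> x) ((p @ replicate (?k - m) x) @ (filter (\<lambda>y. y \<noteq> x) s @ q)) = filter (\<lambda>y. y \<noteq> x) u"
    using u(1) by simp
  finally show ?thesis .
qed

lemma dead_all:
  assumes "distinct xs" "\<forall>x\<in>set xs. dead m u x"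
  shows "e u = e (concat (map (\<lambda>x. replicate m x) xs) @ filter (\<lambda>y. y \<notin> set xs) u)"
  using assms
proof (induction xs arbitrary: u)
  case Nil
  then show ?case by simp
next
  case (Cons x xs)
  have "e u = e (replicate m x @ filter (\<lambda>y. y \<noteq> x) u)"
    using Cons.prems by (intro absorb_dead) auto
  also have "\<dots> = e (replicate m x) \<otimes>\<^bsub>G\<^esub> e (filter (\<lambda>y. y \<noteq> x) u)" by simp
  also have "e (filter (\<lambda>y. y \<noteq> x) u) =
      e (concat (map (\<lambda>x. replicate m x) xs) @ filter (\<lambda>y. y \<notin> set xs) (filter (\<lambda>y. y \<noteq> x) u))"
    using Cons.prems by (intro Cons.IH) (auto intro: dead_filter)
  also have "filter (\<lambda>y. y \<notin> set xs) (filter (\<lambda>y. y \<noteq> x) u) = filter (\<lambda>y. y \<notin> set (x # xs)) u"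
    by (auto simp: filter_filter intro: filter_cong)
  finally show ?case by (simp add: m_assoc)
qed

end


definition lin :: "nat list \<Rightarrow> nat \<Rightarrow> bool" where
  "lin u y \<longleftrightarrow> count (mset u) y = 1"

fun bl :: "(nat \<Rightarrow> bool) \<Rightarrow> nat list \<Rightarrow> nat list list" where
  "bl P [] = [[]]"
| "bl P (a # w) = (if P a then [] # bl P w else (a # hd (bl P w)) # tl (bl P w))"

fun joinl :: "'x list list \<Rightarrow> 'x list list \<Rightarrow> 'x list" where
  "joinl [] ss = []"
| "joinl (b # bs) [] = b"
| "joinl (b # bs) (s # ss) = b @ s @ joinl bs ss"

lemma bl_ne [simp]: "bl P w \<noteq> []"
  by (induction w) auto

lemma joinl_Cons_Cons: "joinl ((a # b) # bs) ss = a # joinl (b # bs) ss"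
  by (cases ss) auto

lemma join_bl: "joinl (bl P w) (map (\<lambda>t. [t]) (filter P w)) = w"
proof (induction w)
  case Nil
  then show ?case by simp
next
  case (Cons a w)
  show ?case
  proof (cases "P a")
    case True
    then show ?thesis using Cons by simp
  next
    case False
    have "bl P w = hd (bl P w) # tl (bl P w)" by simp
    then have "joinl (bl P (a # w)) (map (\<lambda>t. [t]) (filter P (a # w))) =
      a # joinl (bl P w) (map (\<lambda>t. [t]) (filter P w))"
      using False by (simp add: joinl_Cons_Cons)
    then show ?thesis using Cons by simp
  qed
qed

lemma length_bl: "length (bl P w) = Suc (length (filter P w))"
proof (induction w)
  case (Cons a w)
  have "bl P w = hd (bl P w) # tl (bl P w)" by simp
  then have "length (tl (bl P w)) = length (filter P w)" using Cons
    by (metis diff_Suc_1 length_tl)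
  then show ?case using Cons by auto
qed simp

lemma bl_hd_prefix: "prefix (hd (bl P w)) w"
  by (induction w) (auto)

lemma bl_sublist: "b \<in> set (bl P w) \<Longrightarrow> \<exists>p q. w = p @ b @ q"
proof (induction w arbitrary: b)
  case Nil
  then show ?case by simp
next
  case (Cons a w)
  show ?case
  proof (cases "P a")
    case True
    then show ?thesis using Cons by (auto; metis append_Cons append_Nil)
  next
    case False
    have bs: "bl P w = hd (bl P w) # tl (bl P w)" by simp
    from Cons.prems False have "b = a # hd (bl P w) \<or> b \<in> set (tl (bl P w))" by auto
    then show ?thesis
    proof
      assume "b = a # hd (bl P w)"
      moreover obtain zs where "w = hd (bl P w) @ zs" using bl_hd_prefix[of P w] by (auto simp: prefix_def)
      ultimately have "a # w = [] @ b @ zs" by simp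
      then show ?thesis by blast
    next
      assume "b \<in> set (tl (bl P w))"
      then have "b \<in> set (bl P w)" using bs by (metis list.set_sel(2) list.distinct(1))
      then obtain p q where "w = p @ b @ q" using Cons.IH by blast
      then show ?thesis by (metis append_Cons)
    qed
  qed
qed

lemma bl_letters: "b \<in> set (bl P w) \<Longrightarrow> y \<in> set b \<Longrightarrow> \<not> P y \<and> y \<in> set w"
proof (induction w arbitrary: b)
  case Nil
  then show ?case by simp
next
  case (Cons a w)
  have bs: "bl P w = hd (bl P w) # tl (bl P w)" by simp
  show ?case
  proof (cases "P a")
    case True
    then show ?thesis using Cons by auto
  next
    case False
    from Cons.prems False have "b = a # hd (bl P w) \<or> b \<in> set (tl (bl P w))" by auto
    then show ?thesis
    proof
      assume b: "b = a # hd (bl P w)"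
      have h: "hd (bl P w) \<in> set (bl P w)" using bs by (metis list.set_intros(1))
      show ?thesis
      proof (cases "y = a")
        case True
        then show ?thesis using False by simp
      next
        case ya: False
        then have "y \<in> set (hd (bl P w))" using b Cons.prems by simp
        then show ?thesis using Cons.IH[OF h] by simp
      qed
    next
      assume "b \<in> set (tl (bl P w))"
      then have "b \<in> set (bl P w)" using bs by (metis list.set_sel(2) list.distinct(1))
      then show ?thesis using Cons by auto
    qed
  qed
qed

lemma bl_filter:
  assumes "\<And>y. P y \<Longrightarrow> Q y"
  shows "bl P (filter Q w) = map (filter Q) (bl P w)"
proof (induction w)
  case Nil
  then show ?case by simp
next
  case (Cons a w)
  have bs: "bl P w = hd (bl P w) # tl (bl P w)" by simp
  show ?case
  proof (cases "P a")
    case True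
    then show ?thesis using Cons assms by auto
  next
    case False
    show ?thesis
    proof (cases "Q a")
      case True
      have "hd (map (filter Q) (bl P w)) = filter Q (hd (bl P w))"
        "tl (map (filter Q) (bl P w)) = map (filter Q) (tl (bl P w))"
        by (simp_all add: hd_map map_tl)
      then show ?thesis using Cons False True by simp
    next
      case nQ: False
      have "map (filter Q) (bl P w) = filter Q (hd (bl P w)) # map (filter Q) (tl (bl P w))"
        using bs by (metis list.simps(9))
      then show ?thesis using Cons False nQ by simp
    qed
  qed
qed

definition alive :: "nat \<Rightarrow> nat list \<Rightarrow> nat \<Rightarrow> bool" where
  "alive m u x \<longleftrightarrow> (\<forall>b\<in>set (bl (lin u) u). count (mset b) x < m)"

definition Dset :: "nat \<Rightarrow> nat list \<Rightarrow> nat set" where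
  "Dset m u = {x \<in> set u. \<not> lin u x \<and> \<not> alive m u x}"

definition nf :: "nat \<Rightarrow> nat list \<Rightarrow> nat list" where
  "nf m u = concat (map (\<lambda>x. replicate m x) (sorted_list_of_set (Dset m u))) @
     joinl (map (\<lambda>b. sort (filter (\<lambda>y. y \<notin> Dset m u) b)) (bl (lin u) u))
           (map (\<lambda>t. [t]) (filter (lin u) u))"

lemma count_ge2: "y \<in> set u \<Longrightarrow> \<not> lin u y \<Longrightarrow> count (mset u) y \<ge> 2"
proof -
  assume "y \<in> set u" "\<not> lin u y"
  then have "count (mset u) y \<noteq> 0" "count (mset u) y \<noteq> 1" unfolding lin_def by simp_all
  then show ?thesis by linarith
qed

lemma Dset_dead:
  assumes "x \<in> Dset m u"
  shows "dead m u x"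
proof -
  from assms obtain b where b: "b \<in> set (bl (lin u) u)" "count (mset b) x \<ge> m"
    unfolding Dset_def alive_def by (auto simp: not_less)
  obtain p q where "u = p @ b @ q" using bl_sublist[OF b(1)] by blast
  moreover have "\<forall>y\<in>set b. count (mset u) y \<ge> 2"
    using bl_letters[OF b(1)] count_ge2 by blast
  ultimately show ?thesis using b(2) unfolding dead_def by blast
qed

context Em begin

lemma block_sort:
  assumes "length bs = Suc (length ss)"
    "\<forall>y\<in>set (concat bs). count (mset (pre @ joinl bs ss)) y \<ge> 2"
  shows "e (pre @ joinl bs ss) = e (pre @ joinl (map sort bs) ss)"
  using assms
proof (induction ss arbitrary: bs pre)
  case Nil
  then obtain b where bs: "bs = [b]" by (cases bs) auto
  have "e (pre @ b @ []) = e (pre @ sort b @ [])"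
    by (rule perm_lemma) (use Nil.prems bs in auto)
  then show ?case using bs by simp
next
  case (Cons s ss)
  then obtain b bs0 where bs: "bs = b # bs0" by (cases bs) auto
  have "e (pre @ joinl bs (s # ss)) = e (pre @ b @ (s @ joinl bs0 ss))" using bs by simp
  also have "\<dots> = e (pre @ sort b @ (s @ joinl bs0 ss))"
    by (rule perm_lemma) (use Cons.prems bs in auto)
  also have "\<dots> = e ((pre @ sort b @ s) @ joinl bs0 ss)" by simp
  also have "\<dots> = e ((pre @ sort b @ s) @ joinl (map sort bs0) ss)"
  proof (rule Cons.IH)
    show "length bs0 = Suc (length ss)" using Cons.prems bs by simp
    have "mset ((pre @ sort b @ s) @ joinl bs0 ss) = mset (pre @ joinl bs (s # ss))"
      using bs by simp
    then show "\<forall>y\<in>set (concat bs0). count (mset ((pre @ sort b @ s) @ joinl bs0 ss)) y \<ge> 2"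
      using Cons.prems bs by simp
  qed
  also have "\<dots> = e (pre @ joinl (map sort bs) (s # ss))" using bs by simp
  finally show ?case .
qed

lemma e_nf: "e u = e (nf m u)"
proof -
  let ?D = "Dset m u"
  let ?P = "lin u"
  let ?xs = "sorted_list_of_set ?D"
  let ?Q = "\<lambda>y. y \<notin> ?D"
  have finD: "finite ?D" unfolding Dset_def by simp
  have "e u = e (concat (map (\<lambda>x. replicate m x) ?xs) @ filter (\<lambda>y. y \<notin> set ?xs) u)"
    by (rule dead_all) (use finD Dset_dead in auto)
  also have "set ?xs = ?D" using finD by simp
  finally have 1: "e u = e (concat (map (\<lambda>x. replicate m x) ?xs) @ filter ?Q u)" .
  have PQ: "\<And>y. ?P y \<Longrightarrow> ?Q y" unfolding Dset_def by auto
  have fP: "filter ?P (filter ?Q u) = filter ?P u"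
    using PQ by (auto simp: filter_filter intro: filter_cong)
  have "filter ?Q u = joinl (bl ?P (filter ?Q u)) (map (\<lambda>t. [t]) (filter ?P (filter ?Q u)))"
    by (rule join_bl[symmetric])
  also have "\<dots> = joinl (map (filter ?Q) (bl ?P u)) (map (\<lambda>t. [t]) (filter ?P u))"
    using bl_filter[of ?P ?Q u] PQ fP by simp
  finally have 2: "filter ?Q u = joinl (map (filter ?Q) (bl ?P u)) (map (\<lambda>t. [t]) (filter ?P u))" .
  have "e ([] @ joinl (map (filter ?Q) (bl ?P u)) (map (\<lambda>t. [t]) (filter ?P u))) =
        e ([] @ joinl (map sort (map (filter ?Q) (bl ?P u))) (map (\<lambda>t. [t]) (filter ?P u)))"
  proof (rule block_sort)
    show "length (map (filter ?Q) (bl ?P u)) = Suc (length (map (\<lambda>t. [t]) (filter ?P u)))"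
      by (simp add: length_bl)
    show "\<forall>y\<in>set (concat (map (filter ?Q) (bl ?P u))).
        count (mset ([] @ joinl (map (filter ?Q) (bl ?P u)) (map (\<lambda>t. [t]) (filter ?P u)))) y \<ge> 2"
    proof
      fix y assume "y \<in> set (concat (map (filter ?Q) (bl ?P u)))"
      then obtain b where b: "b \<in> set (bl ?P u)" "y \<in> set b" "?Q y" by auto
      then have "count (mset u) y \<ge> 2" using bl_letters[OF b(1,2)] count_ge2 by blast
      then have "count (mset (filter ?Q u)) y \<ge> 2" using b(3) by simp
      then show "count (mset ([] @ joinl (map (filter ?Q) (bl ?P u)) (map (\<lambda>t. [t]) (filter ?P u)))) y \<ge> 2"
        using 2 by simp
    qed
  qed
  then have "e (filter ?Q u) = e (joinl (map (\<lambda>b. sort (filter ?Q b)) (bl ?P u)) (map (\<lambda>t. [t]) (filter ?P u)))"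
    using 2 by (simp add: comp_def)
  then show ?thesis using 1 unfolding nf_def by simp
qed

end


primrec idx :: "nat list \<Rightarrow> nat \<Rightarrow> nat" where
  "idx [] y = 0"
| "idx (t # ts) y = (if t = y then 0 else Suc (idx ts y))"

lemma idx_nth: "distinct ts \<Longrightarrow> i < length ts \<Longrightarrow> idx ts (ts ! i) = i"
proof (induction ts arbitrary: i)
  case (Cons t ts)
  then show ?case by (cases i) (auto simp: nth_mem)
qed simp

lemma nth_idx: "y \<in> set ts \<Longrightarrow> ts ! (idx ts y) = y"
  by (induction ts) auto

lemma joinl_app_hd: "joinl ((A @ b) # bs) ss = A @ joinl (b # bs) ss"
  by (cases ss) auto

lemma T_lemma:
  assumes "\<And>y. \<theta> y = (if P y then g y else if y = x then [0] else [])"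
  shows "concat (map \<theta> w) = joinl (map (\<lambda>b. replicate (count (mset b) x) (0::nat)) (bl P w)) (map g (filter P w))"
proof (induction w)
  case Nil
  then show ?case by simp
next
  case (Cons a w)
  define R where "R b = replicate (count (mset b) x) (0::nat)" for b
  show ?case
  proof (cases "P a")
    case True
    then show ?thesis using Cons assms by simp
  next
    case False
    define bs where "bs = bl P w"
    have bs: "bs = hd bs # tl bs" unfolding bs_def by simp
    have Ra: "R (a # hd bs) = \<theta> a @ R (hd bs)"
    proof (cases "a = x")
      case True
      then show ?thesis using assms[of a] False by (simp add: R_def)
    next
      case False
      then show ?thesis using assms[of a] \<open>\<not> P a\<close> by (simp add: R_def)
    qed
    have "joinl (map R (bl P (a # w))) (map g (filter P (a # w))) =
          joinl ((\<theta> a @ R (hd bs)) # map R (tl bs)) (map g (filter P w))"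
      using False Ra by (simp add: bs_def)
    also have "\<dots> = \<theta> a @ joinl (R (hd bs) # map R (tl bs)) (map g (filter P w))"
      by (rule joinl_app_hd)
    also have "R (hd bs) # map R (tl bs) = map R bs" using bs by (metis list.simps(9))
    finally have "joinl (map R (bl P (a # w))) (map g (filter P (a # w))) =
       \<theta> a @ joinl (map R (bl P w)) (map g (filter P w))" by (simp add: bs_def)
    then show ?thesis using Cons unfolding R_def by simp
  qed
qed

lemma rep_sep:
  assumes "replicate c (0::nat) @ Suc i # X = replicate c' 0 @ Suc i' # Y"
  shows "c = c' \<and> i = i' \<and> X = Y"
  using assms
proof (induction c arbitrary: c')
  case 0
  then show ?case by (cases c') auto
next
  case (Suc c)
  then show ?case by (cases c') auto
qed

lemma rep_not_sep: "replicate c (0::nat) \<noteq> replicate c' 0 @ Suc i # Y"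
proof
  assume "replicate c (0::nat) = replicate c' 0 @ Suc i # Y"
  then have "Suc i \<in> set (replicate c (0::nat))" by (metis in_set_conv_decomp)
  then show False by simp
qed

lemma inj_join:
  assumes "joinl (map (\<lambda>c. replicate c (0::nat)) a) (map (\<lambda>i. Suc i # replicate (h i) 0) ns) =
           joinl (map (\<lambda>c. replicate c 0) a') (map (\<lambda>i. Suc i # replicate (h i) 0) ns')"
    "length a = Suc (length ns)" "length a' = Suc (length ns')"
  shows "ns = ns' \<and> a = a'"
  using assms
proof (induction ns arbitrary: ns' a a')
  case Nil
  then obtain c where a: "a = [c]" by (cases a) auto
  show ?case
  proof (cases ns')
    case Nil
    then obtain c' where "a' = [c']" using Nil.prems by (cases a') auto
    then show ?thesis using Nil.prems a \<open>ns' = []\<close> by simp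
  next
    case (Cons i' ns0')
    then obtain c' a0' where "a' = c' # a0'" using Nil.prems by (cases a') auto
    then show ?thesis using Nil.prems a Cons rep_not_sep by simp
  qed
next
  case (Cons i ns0)
  then obtain c a0 where a: "a = c # a0" by (cases a) auto
  show ?case
  proof (cases ns')
    case Nil
    then obtain c' where "a' = [c']" using Cons.prems by (cases a') auto
    then have "replicate c' (0::nat) = replicate c 0 @ Suc i # (replicate (h i) 0 @ joinl (map (\<lambda>c. replicate c 0) a0) (map (\<lambda>i. Suc i # replicate (h i) 0) ns0))"
      using Cons.prems(1) a Nil by simp
    then show ?thesis using rep_not_sep by blast
  next
    case (Cons i' ns0')
    then obtain c' a0' where a': "a' = c' # a0'" using Cons.prems by (cases a') auto
    have "replicate c (0::nat) @ Suc i # (replicate (h i) 0 @ joinl (map (\<lambda>c. replicate c 0) a0) (map (\<lambda>i. Suc i # replicate (h i) 0) ns0)) =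
          replicate c' 0 @ Suc i' # (replicate (h i') 0 @ joinl (map (\<lambda>c. replicate c 0) a0') (map (\<lambda>i. Suc i # replicate (h i) 0) ns0'))"
      using Cons.prems(1) a a' \<open>ns' = i' # ns0'\<close> by simp
    from rep_sep[OF this] have "c = c'" "i = i'"
      "joinl (map (\<lambda>c. replicate c 0) a0) (map (\<lambda>i. Suc i # replicate (h i) 0) ns0) =
       joinl (map (\<lambda>c. replicate c 0) a0') (map (\<lambda>i. Suc i # replicate (h i) 0) ns0')" by auto
    moreover have "ns0 = ns0' \<and> a0 = a0'"
      using Cons.IH[OF calculation(3)] Cons.prems a a' \<open>ns' = i' # ns0'\<close> by simp
    ultimately show ?thesis using a a' \<open>ns' = i' # ns0'\<close> by simp
  qed
qed

lemma join_compute: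
  assumes "length a = Suc k" "\<forall>c\<in>set a. c \<le> m - 1"
  shows "joinl (map (\<lambda>c. replicate c (0::nat)) a) (map (\<lambda>i. Suc (n + i) # replicate (m - 1 - a ! Suc i) 0) [0..<k]) =
         replicate (a ! 0) 0 @ concat (map (\<lambda>i. Suc (n + i) # replicate (m - 1) 0) [0..<k])"
  using assms
proof (induction k arbitrary: a n)
  case 0
  then obtain c where "a = [c]" by (cases a) auto
  then show ?case by simp
next
  case (Suc k)
  then obtain c a' where a: "a = c # a'" by (cases a) auto
  have la': "length a' = Suc k" using Suc.prems a by simp
  then obtain c1 a'' where a': "a' = c1 # a''" by (cases a') auto
  have up: "[0..<Suc k] = 0 # map Suc [0..<k]" by (simp add: map_Suc_upt upt_conv_Cons)
  have IH: "joinl (map (\<lambda>c. replicate c (0::nat)) a') (map (\<lambda>i. Suc (Suc n + i) # replicate (m - 1 - a' ! Suc i) 0) [0..<k]) =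
         replicate (a' ! 0) 0 @ concat (map (\<lambda>i. Suc (Suc n + i) # replicate (m - 1) 0) [0..<k])"
    using Suc.IH[of a' "Suc n"] la' Suc.prems a by simp
  have c1: "c1 \<le> m - 1" using Suc.prems a a' by simp
  have "joinl (map (\<lambda>c. replicate c (0::nat)) a) (map (\<lambda>i. Suc (n + i) # replicate (m - 1 - a ! Suc i) 0) [0..<Suc k])
    = replicate c 0 @ (Suc n # replicate (m - 1 - c1) 0) @
       joinl (map (\<lambda>c. replicate c (0::nat)) a') (map (\<lambda>i. Suc (Suc n + i) # replicate (m - 1 - a' ! Suc i) 0) [0..<k])"
    unfolding up using a a' by (simp add: comp_def del: upt_Suc)
  also have "\<dots> = replicate c 0 @ (Suc n # replicate (m - 1 - c1) 0 @ replicate c1 0) @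
       concat (map (\<lambda>i. Suc (Suc n + i) # replicate (m - 1) 0) [0..<k])"
    unfolding IH using a' by simp
  also have "replicate (m - 1 - c1) (0::nat) @ replicate c1 0 = replicate (m - 1) 0"
    using c1 by (simp add: replicate_add[symmetric])
  finally show ?case unfolding up using a by (simp add: comp_def del: upt_Suc)
qed

lemma sublist_concat_map: "y \<in> set w \<Longrightarrow> sublist (f y) (concat (map f w))"
proof -
  assume "y \<in> set w"
  then obtain p q where "w = p @ y # q" by (metis split_list)
  then show ?thesis by simp
qed

lemma distinct_filter_lin: "distinct (filter (lin u) u)"
  unfolding distinct_count_atmost_1 by (auto simp: lin_def) (metis count_mset_0_iff Zero_not_Suc)

lemma sat_sym: "satisfies G (u, v) \<Longrightarrow> satisfies G (v, u)"
  unfolding satisfies_def by auto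



lemma concat_map_nil: "(\<forall>b\<in>set w. f b = []) \<Longrightarrow> concat (map f w) = []"
  by (induction w) auto

lemma B_subset:
  assumes H: "\<forall>r\<ge>1. satisfies (factor_monoid (w_mr m r)) (u, v)"
  shows "set u \<subseteq> set v"
proof
  fix a assume a: "a \<in> set u"
  let ?w = "w_mr m 1"
  define \<phi> where "\<phi> n = (if n \<in> set v then Some ([]::nat list) else None)" for n
  have car: "\<forall>n. \<phi> n \<in> carrier (factor_monoid ?w)"
    by (simp add: factor_monoid_def \<phi>_def)
  have eq: "word_eval (factor_monoid ?w) \<phi> u = word_eval (factor_monoid ?w) \<phi> v"
    using H car unfolding satisfies_def by auto
  have c: "concat (map (\<lambda>a. the (\<phi> a)) v) = []" by (rule concat_map_nil) (simp add: \<phi>_def)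
  have nn: "\<forall>b\<in>set v. \<phi> b \<noteq> None" by (simp add: \<phi>_def)
  have "word_eval (factor_monoid ?w) \<phi> v = Some []" unfolding eval_fm c using nn by simp
  then have "\<forall>b\<in>set u. \<phi> b \<noteq> None" using eq by (simp add: eval_fm split: if_splits)
  then show "a \<in> set v" using a by (auto simp: \<phi>_def split: if_splits)
qed

lemma B_core:
  assumes m2: "m \<ge> 2"
    and H: "\<forall>r\<ge>1. satisfies (factor_monoid (w_mr m r)) (u, v)"
    and setuv: "set u = set v"
    and al: "alive m u x"
  shows "filter (lin u) v = filter (lin u) u \<and>
    map (\<lambda>b. count (mset b) x) (bl (lin u) v) = map (\<lambda>b. count (mset b) x) (bl (lin u) u)"
proof -
  define P where "P = lin u"
  define ts where "ts = filter P u"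
  define k where "k = length ts"
  define a where "a = map (\<lambda>b. count (mset b) x) (bl P u)"
  define h where "h i = m - 1 - a ! Suc i" for i
  define g where "g y = Suc (idx ts y) # replicate (h (idx ts y)) (0::nat)" for y
  define \<theta> where "\<theta> y = (if P y then g y else if y = x then [0] else [])" for y
  have la: "length a = Suc k" unfolding a_def k_def ts_def by (simp add: length_bl)
  have ale: "\<forall>c\<in>set a. c \<le> m - 1" using al unfolding a_def alive_def P_def by fastforce
  have dts: "distinct ts" unfolding ts_def P_def by (rule distinct_filter_lin)
  have Tu: "concat (map \<theta> u) = joinl (map (\<lambda>c. replicate c 0) a) (map g ts)"
    unfolding T_lemma[of \<theta> P g x, OF \<theta>_def] a_def ts_def by (simp add: comp_def)
  have gts: "map g ts = map (\<lambda>i. Suc (0 + i) # replicate (m - 1 - a ! Suc i) 0) [0..<k]"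
  proof -
    have "map g ts = map g (map (\<lambda>i. ts ! i) [0..<k])" unfolding k_def by (simp add: map_nth)
    also have "\<dots> = map (\<lambda>i. Suc (0 + i) # replicate (m - 1 - a ! Suc i) 0) [0..<k]"
      using dts by (auto simp: g_def h_def idx_nth k_def)
    finally show ?thesis .
  qed
  have \<theta>u: "concat (map \<theta> u) = replicate (a ! 0) 0 @ concat (map (\<lambda>i. Suc (0 + i) # replicate (m - 1) 0) [0..<k])"
    unfolding Tu gts by (rule join_compute[OF la ale])
  have a0: "a ! 0 \<le> m - 1" using ale la by (simp add: nth_mem)
  let ?w = "w_mr m (Suc k)"
  have "?w = replicate (m - 1) 0 @ concat (map (\<lambda>i. i # replicate (m - 1) 0) (map Suc [0..<Suc k]))"
    unfolding w_mr_def by (simp add: map_Suc_upt)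
  also have "\<dots> = replicate (m - 1 - a ! 0) 0 @ concat (map \<theta> u) @ (Suc k # replicate (m - 1) 0)"
    unfolding \<theta>u using a0 by (simp add: replicate_add[symmetric] comp_def)
  finally have wdec: "?w = replicate (m - 1 - a ! 0) 0 @ concat (map \<theta> u) @ (Suc k # replicate (m - 1) 0)" .
  then have subu: "sublist (concat (map \<theta> u)) ?w" by simp
  define \<phi> where "\<phi> n = Some (if n \<in> set u then \<theta> n else [])" for n
  have car: "\<forall>n. \<phi> n \<in> carrier (factor_monoid ?w)"
  proof
    fix n
    have "sublist (if n \<in> set u then \<theta> n else []) ?w"
      using sublist_concat_map[of n u \<theta>] subu sublist_order.order_trans by auto
    then show "\<phi> n \<in> carrier (factor_monoid ?w)" by (simp add: factor_monoid_def \<phi>_def)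
  qed
  have eq: "word_eval (factor_monoid ?w) \<phi> u = word_eval (factor_monoid ?w) \<phi> v"
    using H car unfolding satisfies_def by auto
  have mu: "concat (map (\<lambda>n. the (\<phi> n)) u) = concat (map \<theta> u)"
    by (rule arg_cong[where f=concat], rule map_cong) (auto simp: \<phi>_def)
  have mv: "concat (map (\<lambda>n. the (\<phi> n)) v) = concat (map \<theta> v)"
    by (rule arg_cong[where f=concat], rule map_cong) (auto simp: \<phi>_def setuv)
  have "word_eval (factor_monoid ?w) \<phi> u = Some (concat (map \<theta> u))"
    using subu mu by (simp add: eval_fm \<phi>_def)
  then have vv: "concat (map \<theta> v) = concat (map \<theta> u)"
    using eq mv by (simp add: eval_fm split: if_splits)
  define av where "av = map (\<lambda>b. count (mset b) x) (bl P v)"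
  have Tv: "concat (map \<theta> v) = joinl (map (\<lambda>c. replicate c 0) av) (map g (filter P v))"
    unfolding T_lemma[of \<theta> P g x, OF \<theta>_def] av_def by (simp add: comp_def)
  have gform: "map g xs = map (\<lambda>i. Suc i # replicate (h i) 0) (map (idx ts) xs)" for xs
    by (simp add: g_def)
  have "map (idx ts) (filter P v) = map (idx ts) ts \<and> av = a"
    by (rule inj_join[where h=h]) (use vv Tu Tv gform la in \<open>auto simp: av_def length_bl k_def\<close>)
  moreover have "inj_on (idx ts) (set (filter P v) \<union> set ts)"
  proof (rule inj_onI)
    fix y y' assume y: "y \<in> set (filter P v) \<union> set ts" "y' \<in> set (filter P v) \<union> set ts"
      and e: "idx ts y = idx ts y'"
    have "y \<in> set ts" "y' \<in> set ts" using y setuv by (auto simp: ts_def)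
    then show "y = y'" using e nth_idx by metis
  qed
  ultimately have "filter P v = ts" "av = a" by (auto simp: inj_on_map_eq_map)
  then show ?thesis unfolding P_def ts_def av_def a_def by simp
qed



lemma count_filter_list: "count (mset (filter P w)) y = (if P y then count (mset w) y else 0)"
  by simp

lemma alive_fresh: "m \<ge> 2 \<Longrightarrow> x \<notin> set u \<Longrightarrow> alive m u x"
  unfolding alive_def
proof
  fix b assume "m \<ge> 2" "x \<notin> set u" "b \<in> set (bl (lin u) u)"
  then have "x \<notin> set b" using bl_letters by blast
  then have "count (mset b) x = 0" by simp
  then show "count (mset b) x < m" using \<open>m \<ge> 2\<close> by linarith
qed

lemma B_nf:
  assumes m2: "m \<ge> 2"
    and H: "\<forall>r\<ge>1. satisfies (factor_monoid (w_mr m r)) (u, v)"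
  shows "nf m u = nf m v"
proof -
  have H': "\<forall>r\<ge>1. satisfies (factor_monoid (w_mr m r)) (v, u)" using H sat_sym by blast
  have setuv: "set u = set v" using B_subset[OF H] B_subset[OF H'] by blast
  obtain x0 :: nat where x0: "x0 \<notin> set u"
    using ex_new_if_finite[OF infinite_UNIV_nat, of "set u"] by blast
  have c1: "filter (lin u) v = filter (lin u) u"
    using B_core[OF m2 H setuv alive_fresh[OF m2 x0]] by blast
  have c2: "filter (lin v) u = filter (lin v) v"
    using B_core[OF m2 H' setuv[symmetric] alive_fresh[OF m2, of x0 v]] x0 setuv by blast
  have linuv: "lin u = lin v"
  proof
    fix y
    show "lin u y = lin v y"
    proof
      assume l: "lin u y"
      have "count (mset v) y = count (mset (filter (lin u) v)) y" using l by simp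
      also have "\<dots> = count (mset (filter (lin u) u)) y" using c1 by simp
      also have "\<dots> = 1" using l by (simp add: lin_def)
      finally show "lin v y" by (simp add: lin_def)
    next
      assume l: "lin v y"
      have "count (mset u) y = count (mset (filter (lin v) u)) y" using l by simp
      also have "\<dots> = count (mset (filter (lin v) v)) y" using c2 by simp
      also have "\<dots> = 1" using l by (simp add: lin_def)
      finally show "lin u y" by (simp add: lin_def)
    qed
  qed
  let ?P = "lin u"
  have cnt: "map (\<lambda>b. count (mset b) y) (bl ?P v) = map (\<lambda>b. count (mset b) y) (bl ?P u)"
    if "alive m u y" for y
    using B_core[OF m2 H setuv that] by blast
  have img: "\<forall>b\<in>set B. f b < m" if "f ` set A = f ` set B" "\<forall>b\<in>set A. f b < m"
    for A B :: "nat list list" and f :: "nat list \<Rightarrow> nat"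
  proof
    fix b assume "b \<in> set B"
    then have "f b \<in> f ` set A" using that(1) by simp
    then obtain b' where "b' \<in> set A" "f b = f b'" by auto
    then show "f b < m" using that(2) by simp
  qed
  have aliveuv: "alive m u y = alive m v y" for y
  proof
    assume a: "alive m u y"
    have "set (map (\<lambda>b. count (mset b) y) (bl ?P v)) = set (map (\<lambda>b. count (mset b) y) (bl ?P u))"
      using cnt[OF a] by simp
    then show "alive m v y" using a img unfolding alive_def linuv[symmetric] by (simp only: set_map) blast
  next
    assume a: "alive m v y"
    have "map (\<lambda>b. count (mset b) y) (bl (lin v) u) = map (\<lambda>b. count (mset b) y) (bl (lin v) v)"
      using B_core[OF m2 H' setuv[symmetric] a] by blast
    then have "set (map (\<lambda>b. count (mset b) y) (bl (lin v) u)) = set (map (\<lambda>b. count (mset b) y) (bl (lin v) v))"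
      by simp
    then show "alive m u y" using a img unfolding alive_def linuv by (simp only: set_map) blast
  qed
  have Duv: "Dset m u = Dset m v"
    unfolding Dset_def using setuv linuv aliveuv by auto
  let ?D = "Dset m u"
  let ?Q = "\<lambda>y. y \<notin> ?D"
  have fuv: "filter ?P v = filter ?P u" by (rule c1)
  have len: "length (bl ?P u) = length (bl ?P v)" by (simp add: length_bl fuv)
  have blocks: "map (\<lambda>b. sort (filter ?Q b)) (bl ?P u) = map (\<lambda>b. sort (filter ?Q b)) (bl ?P v)"
  proof (rule nth_equalityI)
    show "length (map (\<lambda>b. sort (filter ?Q b)) (bl ?P u)) = length (map (\<lambda>b. sort (filter ?Q b)) (bl ?P v))"
      using len by simp
  next
    fix i assume "i < length (map (\<lambda>b. sort (filter ?Q b)) (bl ?P u))"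
    then have iu: "i < length (bl ?P u)" and iv: "i < length (bl ?P v)" using len by auto
    have "mset (filter ?Q (bl ?P u ! i)) = mset (filter ?Q (bl ?P v ! i))"
    proof (rule multiset_eqI)
      fix y
      show "count (mset (filter ?Q (bl ?P u ! i))) y = count (mset (filter ?Q (bl ?P v ! i))) y"
      proof (cases "?Q y")
        case False
        then show ?thesis by simp
      next
        case True
        show ?thesis
        proof (cases "alive m u y")
          case True
          have "map (\<lambda>b. count (mset b) y) (bl ?P v) ! i = map (\<lambda>b. count (mset b) y) (bl ?P u) ! i"
            using cnt[OF True] by simp
          then show ?thesis using iu iv \<open>?Q y\<close> by simp
        next
          case False
          have "y \<in> set u" using False alive_fresh[OF m2] by blast
          then have l: "?P y" using False \<open>?Q y\<close> unfolding Dset_def by auto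
          have "y \<notin> set (bl ?P u ! i)" using bl_letters[of "bl ?P u ! i" ?P u y] l iu nth_mem by blast
          moreover have "y \<notin> set (bl ?P v ! i)" using bl_letters[of "bl ?P v ! i" ?P v y] l iv nth_mem by blast
          ultimately have z: "count (mset (bl ?P u ! i)) y = 0" "count (mset (bl ?P v ! i)) y = 0"
            by simp_all
          show ?thesis using z by (simp del: count_mset_0_iff)
        qed
      qed
    qed
    then show "map (\<lambda>b. sort (filter ?Q b)) (bl ?P u) ! i = map (\<lambda>b. sort (filter ?Q b)) (bl ?P v) ! i"
      using iu iv sort_mset_eq by simp
  qed
  show ?thesis unfolding nf_def Duv[symmetric] using blocks fuv linuv[symmetric] by simp
qed

theorem lemma5p2:
  fixes G :: "('a, 'b) monoid_scheme" and m :: nat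
  assumes "m \<ge> 2"
  shows "in_E m G \<longleftrightarrow> in_join_M m G"
proof
  assume E: "in_E m G"
  then have mon: "monoid G" and sat: "\<And>idt. idt \<in> E_ids m \<Longrightarrow> satisfies G idt"
    unfolding in_E_def by auto
  show "in_join_M m G"
    unfolding in_join_M_def
  proof (intro conjI allI impI)
    show "monoid G" by (rule mon)
  next
    fix idt assume H0: "\<forall>r\<ge>1. satisfies (factor_monoid (w_mr m r)) idt"
    obtain u v where idt: "idt = (u, v)" by (cases idt)
    have nfe: "nf m u = nf m v" using B_nf[OF assms] H0 idt by simp
    show "satisfies G idt"
      unfolding satisfies_def idt
    proof (intro allI impI)
      fix \<phi> :: "nat \<Rightarrow> 'a" assume phi: "\<forall>n. \<phi> n \<in> carrier G"
      interpret Em G m \<phi>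
        by (rule Em.intro[OF mon], rule Em_axioms.intro) (use assms sat phi in auto)
      show "word_eval G \<phi> (fst (u, v)) = word_eval G \<phi> (snd (u, v))"
        using e_nf[of u] e_nf[of v] nfe by simp
    qed
  qed
next
  assume J: "in_join_M m G"
  then show "in_E m G"
    unfolding in_join_M_def in_E_def using fm_sat_E[OF assms] by blast
qed


end
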